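(* Let $U\in\mathbb{R}^{n\times a}$ and $\Pi\in\mathbb{R}^{n\times b}$ be such that the concatenation $[U\,|\,\Pi]$ has orthonormal columns, let $\alpha\in[0,1/7]$, and let $S\in\mathbb{R}^{k\times n}$ be an $\alpha$-distortion subspace embedding for $[U\,|\,\Pi]$. Let $M\in\mathbb{R}^{k\times k}$ be symmetric, let $P$ be the orthogonal projection onto the column space of $SU$, and $P^\perp=I-P$. Then for every nonzero $x\in\mathbb{R}^b$, $P^\perp S\Pi x\ne0$ and $$\left|\frac{(P^\perp S\Pi x)^TM(P^\perp S\Pi x)}{\|P^\perp S\Pi x\|^2}-\frac{(S\Pi x)^TM(S\Pi x)}{\|S\Pi x\|^2}\right|\le10\alpha\|M\|.$$
   Context: $S$ is an $\alpha$-distortion subspace embedding for $X\in\mathbb{R}^{n\times m}$ if $(1-\alpha)\|Xv\|^2\le\|SXv\|^2\le(1+\alpha)\|Xv\|^2$ for all $v\in\mathbb{R}^m$. $\|M\|$ is the operator norm. *)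

theory Defs
  imports "HOL-Analysis.Analysis"
begin

definition hcat :: "real^'a^'n \<Rightarrow> real^'b^'n \<Rightarrow> real^('a + 'b)^'n" where
  "hcat U V = (\<chi> i j. case j of Inl p \<Rightarrow> U $ i $ p | Inr q \<Rightarrow> V $ i $ q)"

definition orthonormal_columns :: "real^'m^'n \<Rightarrow> bool" where
  "orthonormal_columns X \<longleftrightarrow> transpose X ** X = mat 1"

definition subspace_embedding :: "real \<Rightarrow> real^'n^'k \<Rightarrow> real^'m^'n \<Rightarrow> bool" where
  "subspace_embedding \<alpha> S X \<longleftrightarrow>
     (\<forall>v. (1 - \<alpha>) * (norm (X *v v))\<^sup>2 \<le> (norm (S *v (X *v v)))\<^sup>2 \<and>
          (norm (S *v (X *v v)))\<^sup>2 \<le> (1 + \<alpha>) * (norm (X *v v))\<^sup>2)"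

definition col_space :: "real^'m^'n \<Rightarrow> (real^'n) set" where
  "col_space A = range (\<lambda>v. A *v v)"

definition orth_proj :: "(real^'n) set \<Rightarrow> real^'n \<Rightarrow> real^'n" where
  "orth_proj W x = (THE p. p \<in> W \<and> (\<forall>w\<in>W. (x - p) \<bullet> w = 0))"

definition op_norm :: "real^'m^'n \<Rightarrow> real" where
  "op_norm A = onorm (\<lambda>v. A *v v)"

end

theory Submission
  imports Defs
begin

definition vl :: "real^'a \<Rightarrow> real^('a+'b::finite)" where
  "vl c = (\<chi> j. case j of Inl p \<Rightarrow> c$p | Inr _ \<Rightarrow> 0)"
definition vr :: "real^'b \<Rightarrow> real^('a::finite+'b)" where
  "vr c = (\<chi> j. case j of Inl _ \<Rightarrow> 0 | Inr q \<Rightarrow> c$q)"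

lemma sum_UNIV_Plus: "sum f (UNIV::('a::finite+'b::finite) set) = sum (f \<circ> Inl) UNIV + sum (f \<circ> Inr) UNIV"
  using sum.Plus[of "UNIV::'a set" "UNIV::'b set" f] by simp

lemma hcat_vl: "hcat U V *v vl c = U *v c"
  by (simp add: vec_eq_iff matrix_vector_mult_def hcat_def vl_def sum_UNIV_Plus o_def)

lemma hcat_vr: "hcat U V *v vr c = V *v c"
  by (simp add: vec_eq_iff matrix_vector_mult_def hcat_def vr_def sum_UNIV_Plus o_def)

lemma vl_vr_orth: "vl c \<bullet> vr d = 0"
  by (simp add: inner_vec_def vl_def vr_def sum_UNIV_Plus o_def)

lemma vr_nz: "x \<noteq> 0 \<Longrightarrow> vr x \<noteq> 0"
  by (auto simp: vec_eq_iff vr_def split: sum.splits)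

lemma orthon_inner:
  assumes "orthonormal_columns H"
  shows "(H *v u) \<bullet> (H *v v) = u \<bullet> v"
proof -
  have "(H *v u) \<bullet> (H *v v) = ((H *v u) v* H) \<bullet> v" by (rule dot_lmul_matrix[symmetric])
  also have "(H *v u) v* H = transpose H *v (H *v u)" by simp
  also have "\<dots> = u" using assms
    by (simp add: orthonormal_columns_def matrix_vector_mul_assoc)
  finally show ?thesis .
qed

lemma orth_proj_props:
  fixes B :: "real^'m^'n"
  obtains c where "orth_proj (col_space B) y = B *v c"
    and "(y - orth_proj (col_space B) y) \<bullet> orth_proj (col_space B) y = 0"
proof -
  let ?W = "col_space B"
  have sub: "subspace ?W" unfolding col_space_def
    by (rule linear_subspace_image[OF matrix_vector_mul_linear subspace_UNIV])
  obtain p q where p: "p \<in> span ?W" and q: "\<And>w. w \<in> span ?W \<Longrightarrow> orthogonal q w"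
    and y: "y = p + q" using orthogonal_subspace_decomp_exists[of ?W y] by metis
  have spW: "span ?W = ?W" using sub by (metis span_eq_iff)
  have pW: "p \<in> ?W" using p spW by simp
  have P: "p \<in> ?W \<and> (\<forall>w\<in>?W. (y - p) \<bullet> w = 0)"
    using pW q spW y by (simp add: orthogonal_def)
  have "orth_proj ?W y = p"
    unfolding orth_proj_def
  proof (rule the_equality)
    show "p \<in> ?W \<and> (\<forall>w\<in>?W. (y - p) \<bullet> w = 0)" by (rule P)
  next
    fix p' assume a: "p' \<in> ?W \<and> (\<forall>w\<in>?W. (y - p') \<bullet> w = 0)"
    have d: "p' - p \<in> ?W" using a pW sub by (simp add: subspace_diff)
    have "(y - p') \<bullet> (p' - p) = 0" "(y - p) \<bullet> (p' - p) = 0" using a P d by auto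
    then have "(p' - p) \<bullet> (p' - p) = 0" by (simp add: inner_diff_left)
    then show "p' = p" by simp
  qed
  moreover obtain c where "p = B *v c" using pW by (auto simp: col_space_def)
  ultimately show ?thesis using that P by auto
qed

lemma opn: "norm (M *v w) \<le> op_norm M * norm w"
  unfolding op_norm_def by (rule onorm[OF matrix_vector_mul_bounded_linear])

lemma opn_pos: "0 \<le> op_norm M"
  unfolding op_norm_def by (rule onorm_pos_le[OF matrix_vector_mul_bounded_linear])

lemma bil: "\<bar>u \<bullet> (M *v w)\<bar> \<le> op_norm M * norm u * norm w"
proof -
  have "\<bar>u \<bullet> (M *v w)\<bar> \<le> norm u * norm (M *v w)" by (rule Cauchy_Schwarz_ineq2)
  also have "\<dots> \<le> norm u * (op_norm M * norm w)" by (rule mult_left_mono[OF opn norm_ge_zero])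
  finally show ?thesis by (simp add: algebra_simps)
qed

lemma rayleigh:
  fixes z y :: "real^'k" and M :: "real^'k^'k"
  assumes z: "z \<noteq> 0" and y: "y \<noteq> 0" and d: "norm (z - y) \<le> d * norm y"
  shows "\<bar>z \<bullet> (M *v z) / (norm z)\<^sup>2 - y \<bullet> (M *v y) / (norm y)\<^sup>2\<bar> \<le> 4 * d * op_norm M"
proof -
  define u where "u = (1 / norm z) *\<^sub>R z"
  define v where "v = (1 / norm y) *\<^sub>R y"
  have nz: "norm z > 0" and ny: "norm y > 0" using z y by auto
  have eu: "z \<bullet> (M *v z) / (norm z)\<^sup>2 = u \<bullet> (M *v u)"
    using nz by (simp add: u_def matrix_vector_mult_scaleR power2_eq_square)
  have ev: "y \<bullet> (M *v y) / (norm y)\<^sup>2 = v \<bullet> (M *v v)"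
    using ny by (simp add: v_def matrix_vector_mult_scaleR power2_eq_square)
  have nu: "norm u = 1" using nz by (simp add: u_def)
  have nv: "norm v = 1" using ny by (simp add: v_def)
  have uv_eq: "u - v = (1 / norm z - 1 / norm y) *\<^sub>R z + (1 / norm y) *\<^sub>R (z - y)"
    by (simp add: u_def v_def algebra_simps)
  have t1: "norm ((1 / norm z - 1 / norm y) *\<^sub>R z) = \<bar>norm y - norm z\<bar> / norm y"
    proof -
    have e: "1 / norm z - 1 / norm y = (norm y - norm z) / (norm z * norm y)" using nz ny by (simp add: field_simps)
    have "norm ((1 / norm z - 1 / norm y) *\<^sub>R z) = \<bar>(norm y - norm z) / (norm z * norm y)\<bar> * norm z" unfolding e by simp
    also have "\<bar>(norm y - norm z) / (norm z * norm y)\<bar> * norm z = \<bar>norm y - norm z\<bar> / norm y"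
      using nz ny by (simp add: abs_div)
    finally show ?thesis .
  qed
  have t2: "\<bar>norm y - norm z\<bar> \<le> norm (z - y)"
    by (metis norm_minus_commute norm_triangle_ineq3)
  have "norm (u - v) \<le> \<bar>norm y - norm z\<bar> / norm y + norm (z - y) / norm y"
    unfolding uv_eq using norm_triangle_ineq[of "(1 / norm z - 1 / norm y) *\<^sub>R z" "(1 / norm y) *\<^sub>R (z - y)"]
    t1 ny by simp
  also have "\<dots> \<le> 2 * norm (z - y) / norm y" using t2 ny by (simp add: field_simps)
  also have "\<dots> \<le> 2 * d" using d ny by (simp add: field_simps)
  finally have uv: "norm (u - v) \<le> 2 * d" .
  have split: "u \<bullet> (M *v u) - v \<bullet> (M *v v) = u \<bullet> (M *v (u - v)) + (u - v) \<bullet> (M *v v)"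
    by (simp add: matrix_vector_mult_diff_distrib inner_diff_left inner_diff_right)
  have "\<bar>u \<bullet> (M *v u) - v \<bullet> (M *v v)\<bar> \<le> op_norm M * norm (u - v) + op_norm M * norm (u - v)"
    unfolding split using bil[of u M "u - v"] bil[of "u - v" M v] nu nv by (simp add: algebra_simps)
  also have "\<dots> \<le> 4 * d * op_norm M" using uv opn_pos[of M]
  proof -
    have "op_norm M * norm (u - v) \<le> op_norm M * (2 * d)" by (rule mult_left_mono[OF uv opn_pos])
    then show ?thesis by (simp add: algebra_simps)
  qed
  finally show ?thesis using eu ev by simp
qed

theorem mainTheorem13:
  fixes U :: "real^'a^'n" and Pi :: "real^'b^'n" and S :: "real^'n^'k"
    and M :: "real^'k^'k" and \<alpha> :: real
  assumes "orthonormal_columns (hcat U Pi)"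
    and "0 \<le> \<alpha>" and "\<alpha> \<le> 1/7"
    and "subspace_embedding \<alpha> S (hcat U Pi)"
    and "transpose M = M"
  shows "\<forall>x::real^'b. x \<noteq> 0 \<longrightarrow>
     (let y = S *v (Pi *v x); z = y - orth_proj (col_space (S ** U)) y in
        z \<noteq> 0 \<and>
        \<bar>(z \<bullet> (M *v z)) / (norm z)\<^sup>2 - (y \<bullet> (M *v y)) / (norm y)\<^sup>2\<bar>
          \<le> 10 * \<alpha> * op_norm M)"
proof (intro allI impI)
  fix x :: "real^'b" assume x0: "x \<noteq> 0"
  note orth = assms(1) and a0 = assms(2) and a7 = assms(3) and emb = assms(4)
  define H where "H = hcat U Pi"
  define y where "y = S *v (Pi *v x)"
  define p where "p = orth_proj (col_space (S ** U)) y"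
  obtain c where pc: "p = (S ** U) *v c" and py: "(y - p) \<bullet> p = 0"
    using orth_proj_props[of "S ** U" y] unfolding p_def by metis
  define a where "a = U *v c"
  define w where "w = Pi *v x"
  have pA: "p = S *v a" by (simp add: pc a_def matrix_vector_mul_assoc)
  have yw: "y = S *v w" by (simp add: y_def w_def)
  have Ha: "H *v vl c = a" by (simp add: H_def a_def hcat_vl)
  have Hw: "H *v vr x = w" by (simp add: H_def w_def hcat_vr)
  have aw: "a \<bullet> w = 0" using orthon_inner[OF orth[folded H_def], of "vl c" "vr x"] Ha Hw vl_vr_orth by simp
  have Nw_eq: "w \<bullet> w = (vr x :: real^('a+'b)) \<bullet> vr x" using orthon_inner[OF orth[folded H_def], of "vr x" "vr x"] Hw by simp
  have Nw_pos: "w \<bullet> w > 0" proof -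
    have "(vr x :: real^('a+'b)) \<noteq> 0" by (rule vr_nz[OF x0])
    then show ?thesis using Nw_eq by simp
  qed
  have E: "(1 - \<alpha>) * (h \<bullet> h) \<le> (S *v h) \<bullet> (S *v h) \<and> (S *v h) \<bullet> (S *v h) \<le> (1 + \<alpha>) * (h \<bullet> h)"
    if "h = H *v v" for h v
    using emb unfolding subspace_embedding_def H_def[symmetric] that by (simp add: power2_norm_eq_inner)
  define K where "K = p \<bullet> p"
  define Na where "Na = a \<bullet> a"
  define Nw where "Nw = w \<bullet> w"
  define Y where "Y = y \<bullet> y"
  have py2: "p \<bullet> y = K" using py unfolding K_def by (simp add: inner_diff_left inner_diff_right inner_commute)
  have Ya: "(1 - \<alpha>) * Nw \<le> Y" using E[OF Hw[symmetric]] unfolding Nw_def Y_def yw by simp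
  have Ka: "(1 - \<alpha>) * Na \<le> K" using E[OF Ha[symmetric]] unfolding Na_def K_def pA by simp
  have fam: "4 * t * s * K \<le> 2 * \<alpha> * (t^2 * Na + s^2 * Nw)" for t s
  proof -
    have hp: "t *\<^sub>R a + s *\<^sub>R w = H *v (t *\<^sub>R vl c + s *\<^sub>R vr x)"
      by (simp add: matrix_vector_right_distrib matrix_vector_mult_scaleR Ha Hw)
    have hm: "t *\<^sub>R a - s *\<^sub>R w = H *v (t *\<^sub>R vl c - s *\<^sub>R vr x)"
      by (simp add: matrix_vector_mult_diff_distrib matrix_vector_mult_scaleR Ha Hw)
    have Sp: "S *v (t *\<^sub>R a + s *\<^sub>R w) = t *\<^sub>R p + s *\<^sub>R y"
      by (simp add: matrix_vector_right_distrib matrix_vector_mult_scaleR pA yw)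
    have Sm: "S *v (t *\<^sub>R a - s *\<^sub>R w) = t *\<^sub>R p - s *\<^sub>R y"
      by (simp add: matrix_vector_mult_diff_distrib matrix_vector_mult_scaleR pA yw)
    have n1: "(t *\<^sub>R a + s *\<^sub>R w) \<bullet> (t *\<^sub>R a + s *\<^sub>R w) = t^2 * Na + s^2 * Nw"
      using aw unfolding Na_def Nw_def
      by (simp add: inner_add_left inner_add_right inner_commute power2_eq_square)
    have n2: "(t *\<^sub>R a - s *\<^sub>R w) \<bullet> (t *\<^sub>R a - s *\<^sub>R w) = t^2 * Na + s^2 * Nw"
      using aw unfolding Na_def Nw_def
      by (simp add: inner_diff_left inner_diff_right inner_commute power2_eq_square)
    have d: "(t *\<^sub>R p + s *\<^sub>R y) \<bullet> (t *\<^sub>R p + s *\<^sub>R y) - (t *\<^sub>R p - s *\<^sub>R y) \<bullet> (t *\<^sub>R p - s *\<^sub>R y) = 4 * t * s * K"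
      using py2 by (simp add: inner_add_left inner_add_right inner_diff_left inner_diff_right inner_commute algebra_simps)
    have e1: "(S *v (t *\<^sub>R a + s *\<^sub>R w)) \<bullet> (S *v (t *\<^sub>R a + s *\<^sub>R w)) \<le> (1 + \<alpha>) * (t^2 * Na + s^2 * Nw)"
      using E[OF hp] n1 by simp
    have e2: "(1 - \<alpha>) * (t^2 * Na + s^2 * Nw) \<le> (S *v (t *\<^sub>R a - s *\<^sub>R w)) \<bullet> (S *v (t *\<^sub>R a - s *\<^sub>R w))"
      using E[OF hm] n2 by simp
    show ?thesis using e1 e2 d unfolding Sp Sm by (simp add: algebra_simps)
  qed
  show "let y = S *v (Pi *v x); z = y - orth_proj (col_space (S ** U)) y in
        z \<noteq> 0 \<and>
        \<bar>(z \<bullet> (M *v z)) / (norm z)\<^sup>2 - (y \<bullet> (M *v y)) / (norm y)\<^sup>2\<bar>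
          \<le> 10 * \<alpha> * op_norm M"
  proof -
    have K0: "0 \<le> K" unfolding K_def by simp
    have Na0: "0 \<le> Na" unfolding Na_def by simp
    have key: "(1 - \<alpha>) * K \<le> \<alpha>^2 * Nw"
    proof (cases "\<alpha> = 0")
      case True
      then show ?thesis using fam[of 1 1] K0 by simp
    next
      case False
      then have ap: "\<alpha> > 0" using a0 by simp
      have f: "4 * (1 - \<alpha>) * \<alpha> * K \<le> 2 * \<alpha> * ((1 - \<alpha>)^2 * Na + \<alpha>^2 * Nw)"
        using fam[of "1 - \<alpha>" \<alpha>] .
      then have "(2 * \<alpha>) * (2 * (1 - \<alpha>) * K) \<le> (2 * \<alpha>) * ((1 - \<alpha>)^2 * Na + \<alpha>^2 * Nw)"
        by (simp add: algebra_simps)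
      then have "2 * (1 - \<alpha>) * K \<le> (1 - \<alpha>)^2 * Na + \<alpha>^2 * Nw"
        using ap by (metis mult_left_le_imp_le zero_less_mult_iff zero_less_numeral)
      moreover have "(1 - \<alpha>)^2 * Na \<le> (1 - \<alpha>) * K"
        using mult_left_mono[OF Ka, of "1 - \<alpha>"] a7 by (simp add: power2_eq_square algebra_simps)
      ultimately show ?thesis by linarith
    qed
    have key2: "(1 - \<alpha>)^2 * K \<le> \<alpha>^2 * Y"
    proof -
      have "(1 - \<alpha>)^2 * K = (1 - \<alpha>) * ((1 - \<alpha>) * K)" by (simp add: power2_eq_square)
      also have "\<dots> \<le> (1 - \<alpha>) * (\<alpha>^2 * Nw)" using key a7 by (intro mult_left_mono) auto
      also have "\<dots> = \<alpha>^2 * ((1 - \<alpha>) * Nw)" by simp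
      also have "\<dots> \<le> \<alpha>^2 * Y" using Ya by (intro mult_left_mono) auto
      finally show ?thesis .
    qed
    have normsq: "((1 - \<alpha>) * norm p)^2 \<le> (\<alpha> * norm y)^2"
      using key2 unfolding K_def Y_def by (simp add: power_mult_distrib power2_norm_eq_inner)
    have np: "(1 - \<alpha>) * norm p \<le> \<alpha> * norm y"
      using power2_le_imp_le[OF normsq] a0 by simp
    have np2: "norm p \<le> (7/6 * \<alpha>) * norm y"
    proof -
      have "(6/7) * norm p \<le> (1 - \<alpha>) * norm p" using a7 by (intro mult_right_mono) auto
      then show ?thesis using np by simp
    qed
    have "(1 - \<alpha>) * Nw > 0" using Nw_pos a7 unfolding Nw_def by (intro mult_pos_pos) auto
    then have Ypos: "Y > 0" using Ya by linarith
    have y0: "y \<noteq> 0" using Ypos unfolding Y_def by auto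
    define z where "z = y - p"
    have nzy: "norm (z - y) \<le> (7/6 * \<alpha>) * norm y" using np2 by (simp add: z_def)
    have "norm y - norm p \<le> norm z" using norm_triangle_ineq2[of y p] by (simp add: z_def)
    moreover have "norm p \<le> (1/6) * norm y" proof -
      have "(7/6 * \<alpha>) * norm y \<le> (1/6) * norm y" using a7 by (intro mult_right_mono) auto
      then show ?thesis using np2 by linarith
    qed
    moreover have "norm y > 0" using y0 by simp
    ultimately have "norm z > 0" by linarith
    then have z0: "z \<noteq> 0" by auto
    have R: "\<bar>z \<bullet> (M *v z) / (norm z)\<^sup>2 - y \<bullet> (M *v y) / (norm y)\<^sup>2\<bar> \<le> 4 * (7/6 * \<alpha>) * op_norm M"
      by (rule rayleigh[OF z0 y0 nzy])
    also have "\<dots> \<le> 10 * \<alpha> * op_norm M" using a0 opn_pos[of M]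
      by (intro mult_right_mono) auto
    finally show ?thesis using z0 unfolding Let_def z_def p_def y_def by simp
  qed
qed

end
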